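(* Let $k\ge 1$ and $t\ge 2$. Let $\mathbf C$ be the set of all binary linear $t$-CIS $[tk,k]$ codes, and let the symmetric group $S_{tk}$ act on $\mathbf C$ by permuting coordinates. Let $\mathbf C_{sys}$ be the set of all $t$-CIS $[tk,k]$ codes having a generator matrix of the form $(I_k\mid A_1\mid\cdots\mid A_{t-1})$ with all $A_j\in GL(k,2)$. Let $C_1,\dots,C_s$ be representatives of the distinct $S_{tk}$-orbits on $\mathbf C$, each chosen in $\mathbf C_{sys}$. Then $$g_k^{\,t-1}=\sum_{i=1}^s\bigl|\mathrm{Orb}_{S_{tk}}(C_i)\cap\mathbf C_{sys}\bigr|,$$ where $g_k=|GL(k,2)|$ and $\mathrm{Orb}_{S_{tk}}(C_i)$ is the orbit of $C_i$.
   Context: A binary linear $[tk,k]$ code is $t$-CIS if its coordinate set can be partitioned into $t$ pairwise disjoint information sets, an information set being a set of $k$ coordinates whose columns in a generator matrix are linearly independent. $I_k$ is the $k\times k$ identity matrix. *)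

theory Defs
  imports "HOL-Library.Z2" "HOL-Combinatorics.Permutations"
begin

definition bvecs :: "nat \<Rightarrow> (nat \<Rightarrow> bit) set" where
  "bvecs n = {x. \<forall>j\<ge>n. x j = 0}"

definition bmats :: "nat \<Rightarrow> nat \<Rightarrow> (nat \<Rightarrow> nat \<Rightarrow> bit) set" where
  "bmats r c = {M. \<forall>i j. (i \<ge> r \<or> j \<ge> c) \<longrightarrow> M i j = 0}"

definition row_space :: "nat \<Rightarrow> nat \<Rightarrow> (nat \<Rightarrow> nat \<Rightarrow> bit) \<Rightarrow> (nat \<Rightarrow> bit) set" where
  "row_space k n G = {x. \<exists>c. x = (\<lambda>j. \<Sum>i<k. c i * G i j)}"

definition gen_matrix :: "nat \<Rightarrow> nat \<Rightarrow> (nat \<Rightarrow> nat \<Rightarrow> bit) \<Rightarrow> (nat \<Rightarrow> bit) set \<Rightarrow> bool" where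
  "gen_matrix n k G C \<longleftrightarrow> G \<in> bmats k n
     \<and> (\<forall>c. (\<forall>j. (\<Sum>i<k. c i * G i j) = 0) \<longrightarrow> (\<forall>i<k. c i = 0))
     \<and> C = row_space k n G"

definition linear_code :: "nat \<Rightarrow> nat \<Rightarrow> (nat \<Rightarrow> bit) set \<Rightarrow> bool" where
  "linear_code n k C \<longleftrightarrow> (\<exists>G. gen_matrix n k G C)"

definition info_set :: "nat \<Rightarrow> nat \<Rightarrow> (nat \<Rightarrow> bit) set \<Rightarrow> nat set \<Rightarrow> bool" where
  "info_set n k C I \<longleftrightarrow> I \<subseteq> {..<n} \<and> card I = k \<and>
     (\<exists>G. gen_matrix n k G C \<and>
        (\<forall>d. (\<forall>i<k. (\<Sum>j\<in>I. d j * G i j) = 0) \<longrightarrow> (\<forall>j\<in>I. d j = 0)))"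

definition CIS_code :: "nat \<Rightarrow> nat \<Rightarrow> (nat \<Rightarrow> bit) set \<Rightarrow> bool" where
  "CIS_code t k C \<longleftrightarrow> linear_code (t*k) k C \<and>
     (\<exists>P :: nat \<Rightarrow> nat set.
        (\<forall>a<t. info_set (t*k) k C (P a)) \<and>
        (\<forall>a<t. \<forall>b<t. a \<noteq> b \<longrightarrow> P a \<inter> P b = {}) \<and>
        (\<Union>a<t. P a) = {..<t*k})"

definition all_CIS :: "nat \<Rightarrow> nat \<Rightarrow> (nat \<Rightarrow> bit) set set" where
  "all_CIS t k = {C. CIS_code t k C}"

definition id_mat :: "nat \<Rightarrow> nat \<Rightarrow> nat \<Rightarrow> bit" where
  "id_mat k i j = (if i < k \<and> j < k \<and> i = j then 1 else 0)"

definition mat_mult :: "nat \<Rightarrow> (nat \<Rightarrow> nat \<Rightarrow> bit) \<Rightarrow> (nat \<Rightarrow> nat \<Rightarrow> bit) \<Rightarrow> nat \<Rightarrow> nat \<Rightarrow> bit" where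
  "mat_mult k A B i j = (\<Sum>l<k. A i l * B l j)"

definition GL2 :: "nat \<Rightarrow> (nat \<Rightarrow> nat \<Rightarrow> bit) set" where
  "GL2 k = {A \<in> bmats k k. \<exists>B \<in> bmats k k.
       (\<forall>i<k. \<forall>j<k. mat_mult k A B i j = id_mat k i j) \<and>
       (\<forall>i<k. \<forall>j<k. mat_mult k B A i j = id_mat k i j)}"

text \<open>The block matrix (I_k | A_1 | ... | A_{t-1}); column b*k + c is column c of block b.\<close>
definition sys_matrix :: "nat \<Rightarrow> nat \<Rightarrow> (nat \<Rightarrow> nat \<Rightarrow> nat \<Rightarrow> bit) \<Rightarrow> nat \<Rightarrow> nat \<Rightarrow> bit" where
  "sys_matrix t k A i j =
     (if i < k \<and> j < t*k then
        (if j < k then id_mat k i j else A (j div k) i (j mod k))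
      else 0)"

definition sys_CIS :: "nat \<Rightarrow> nat \<Rightarrow> (nat \<Rightarrow> bit) set set" where
  "sys_CIS t k = {C. CIS_code t k C \<and>
     (\<exists>A. (\<forall>b\<in>{1..<t}. A b \<in> GL2 k) \<and> gen_matrix (t*k) k (sys_matrix t k A) C)}"

definition perm_code :: "(nat \<Rightarrow> nat) \<Rightarrow> (nat \<Rightarrow> bit) set \<Rightarrow> (nat \<Rightarrow> bit) set" where
  "perm_code \<sigma> C = (\<lambda>x. x \<circ> inv \<sigma>) ` C"

definition orbit_Sn :: "nat \<Rightarrow> (nat \<Rightarrow> bit) set \<Rightarrow> (nat \<Rightarrow> bit) set set" where
  "orbit_Sn n C = {perm_code \<sigma> C | \<sigma>. \<sigma> permutes {..<n}}"

end

theory Submission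
  imports Defs
begin

lemma bit_univ: "(UNIV::bit set) = {0,1}" using bit.exhaust by auto

lemma fin_bit: "finite (UNIV::bit set)" by (subst bit_univ) simp

lemma finite_bvecs: "finite (bvecs n)"
proof -
  have "bvecs n = {f. \<forall>x. (x \<in> {..<n} \<longrightarrow> f x \<in> (UNIV::bit set)) \<and> (x \<notin> {..<n} \<longrightarrow> f x = 0)}"
    unfolding bvecs_def by auto
  then show ?thesis using finite_set_of_finite_funs[of "{..<n}" "UNIV::bit set" 0] fin_bit by simp
qed

lemma finite_bmats: "finite (bmats r c)"
proof -
  have "bmats r c \<subseteq> {M. \<forall>i. (i \<in> {..<r} \<longrightarrow> M i \<in> bvecs c) \<and> (i \<notin> {..<r} \<longrightarrow> M i = (\<lambda>_. 0))}"
    unfolding bmats_def bvecs_def by auto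
  moreover have "finite {M. \<forall>i. (i \<in> {..<r} \<longrightarrow> M i \<in> bvecs c) \<and> (i \<notin> {..<r} \<longrightarrow> M i = (\<lambda>_. 0))}"
    by (rule finite_set_of_finite_funs) (auto simp: finite_bvecs)
  ultimately show ?thesis by (rule finite_subset)
qed

lemma finite_GL2: "finite (GL2 k)"
  using finite_bmats[of k k] unfolding GL2_def by (rule finite_subset[rotated]) auto

lemma sum_id_right: assumes "j < k" shows "(\<Sum>i<k. c i * id_mat k i j) = c j"
proof -
  have "(\<Sum>i<k. c i * id_mat k i j) = (\<Sum>i<k. if j = i then c i else 0)"
    by (rule sum.cong) (auto simp: id_mat_def)
  then show ?thesis using assms by (simp only: sum.delta finite_lessThan) simp
qed

lemma sum_id_left: assumes "i < k" shows "(\<Sum>l<k. id_mat k i l * e l) = e i"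
proof -
  have "(\<Sum>l<k. id_mat k i l * e l) = (\<Sum>l<k. if i = l then e l else 0)"
    by (rule sum.cong) (auto simp: id_mat_def)
  then show ?thesis using assms by (simp only: sum.delta finite_lessThan) simp
qed

lemma GL2_inj:
  assumes "A \<in> GL2 k" and h: "\<forall>i<k. (\<Sum>c<k. A i c * e c) = 0"
  shows "\<forall>c<k. e c = 0"
proof (intro allI impI)
  fix c assume c: "c < k"
  from assms(1) obtain B where BA: "\<forall>i<k. \<forall>j<k. mat_mult k B A i j = id_mat k i j"
    unfolding GL2_def by auto
  have "e c = (\<Sum>l<k. id_mat k c l * e l)" using sum_id_left[OF c] by simp
  also have "\<dots> = (\<Sum>l<k. (\<Sum>m<k. B c m * A m l) * e l)"
    using BA c by (intro sum.cong) (auto simp: mat_mult_def)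
  also have "\<dots> = (\<Sum>m<k. B c m * (\<Sum>l<k. A m l * e l))"
  proof -
    have "(\<Sum>l<k. (\<Sum>m<k. B c m * A m l) * e l) = (\<Sum>l<k. \<Sum>m<k. B c m * (A m l * e l))"
      by (simp only: sum_distrib_right mult.assoc)
    also have "\<dots> = (\<Sum>m<k. \<Sum>l<k. B c m * (A m l * e l))" by (rule sum.swap)
    also have "\<dots> = (\<Sum>m<k. B c m * (\<Sum>l<k. A m l * e l))" by (simp only: sum_distrib_left)
    finally show ?thesis .
  qed
  also have "\<dots> = 0" by (intro sum.neutral ballI) (metis h lessThan_iff mult_zero_right)
  finally show "e c = 0" .
qed

lemma perm_code_id: "perm_code id C = C"
  unfolding perm_code_def by simp

lemma perm_code_comp:
  assumes "\<sigma> permutes S" "\<tau> permutes S"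
  shows "perm_code \<sigma> (perm_code \<tau> C) = perm_code (\<sigma> \<circ> \<tau>) C"
proof -
  have "inv (\<sigma> \<circ> \<tau>) = inv \<tau> \<circ> inv \<sigma>"
    using assms by (simp add: o_inv_distrib permutes_bij bij_is_inj bij_is_surj)
  then show ?thesis unfolding perm_code_def image_image by (simp add: comp_assoc)
qed

lemma orbit_trans:
  assumes "D \<in> orbit_Sn n C" "E \<in> orbit_Sn n D" shows "E \<in> orbit_Sn n C"
proof -
  obtain \<sigma> where s: "\<sigma> permutes {..<n}" "D = perm_code \<sigma> C" using assms(1) unfolding orbit_Sn_def by auto
  obtain \<tau> where t: "\<tau> permutes {..<n}" "E = perm_code \<tau> D" using assms(2) unfolding orbit_Sn_def by auto
  have "E = perm_code (\<tau> \<circ> \<sigma>) C" using s t perm_code_comp by blast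
  moreover have "\<tau> \<circ> \<sigma> permutes {..<n}" using s t permutes_compose by blast
  ultimately show ?thesis unfolding orbit_Sn_def by blast
qed

lemma orbit_sym:
  assumes "D \<in> orbit_Sn n C" shows "C \<in> orbit_Sn n D"
proof -
  obtain \<sigma> where s: "\<sigma> permutes {..<n}" "D = perm_code \<sigma> C" using assms(1) unfolding orbit_Sn_def by auto
  have i: "inv \<sigma> permutes {..<n}" using s permutes_inv by blast
  have "perm_code (inv \<sigma>) D = perm_code (inv \<sigma> \<circ> \<sigma>) C" using s i perm_code_comp by blast
  also have "\<dots> = C" using s permutes_inv_o(2) perm_code_id by metis
  finally show ?thesis using i unfolding orbit_Sn_def by blast
qed

lemma orbit_eq: "D \<in> orbit_Sn n C \<Longrightarrow> orbit_Sn n D = orbit_Sn n C"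
  using orbit_trans orbit_sym by blast

lemma orbit_self: "C \<in> orbit_Sn n C"
  unfolding orbit_Sn_def using permutes_id perm_code_id by blast

lemma sm_low:
  assumes "t \<ge> 1" "i < k" "j < k" shows "sys_matrix t k A i j = id_mat k i j"
proof -
  have "j < t*k" using assms by (metis less_le_trans mult_1 mult_le_mono1)
  then show ?thesis using assms unfolding sys_matrix_def by simp
qed

lemma sm_block:
  assumes "1 \<le> a" "a < t" "i < k" "c < k" shows "sys_matrix t k A i (a*k+c) = A a i c"
proof -
  have "a*k + c < a*k + k" using assms by simp
  also have "\<dots> = Suc a * k" by simp
  also have "\<dots> \<le> t*k" using assms by (intro mult_le_mono1) simp
  finally have 1: "a*k+c < t*k" .
  have 2: "\<not> a*k+c < k" using assms by (metis le_add1 mult_1 mult_le_mono1 not_le order_trans)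
  have 3: "(a*k+c) div k = a" "(a*k+c) mod k = c" using assms by auto
  show ?thesis using 1 2 3 assms unfolding sys_matrix_def by simp
qed

lemma sum_block:
  fixes f :: "nat \<Rightarrow> bit"
  shows "(\<Sum>j\<in>{a*k..<a*k+k}. f j) = (\<Sum>c<k. f (a*k+c))"
proof -
  have eq: "{a*k..<a*k+k} = plus (a*k) ` {0..<k}" by (simp add: add.commute)
  have inj: "inj_on (plus (a*k)) {0..<k}" by simp
  show ?thesis unfolding eq sum.reindex[OF inj] by (simp only: comp_def lessThan_atLeast0)
qed

lemma sys_gen:
  assumes "t \<ge> 1"
  shows "gen_matrix (t*k) k (sys_matrix t k A) (row_space k (t*k) (sys_matrix t k A))"
  unfolding gen_matrix_def
proof (intro conjI allI impI refl)
  show "sys_matrix t k A \<in> bmats k (t*k)" unfolding bmats_def sys_matrix_def by auto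
next
  fix c i assume h: "\<forall>j. (\<Sum>i<k. c i * sys_matrix t k A i j) = 0" and i: "i < k"
  have "c i = (\<Sum>l<k. c l * id_mat k l i)" using sum_id_right[OF i] by simp
  also have "\<dots> = (\<Sum>l<k. c l * sys_matrix t k A l i)"
    using sm_low[OF assms _ i] by (intro sum.cong) auto
  also have "\<dots> = 0" using h by blast
  finally show "c i = 0" .
qed

lemma blocks_disjoint:
  assumes "a \<noteq> (b::nat)" shows "{a*k..<a*k+k} \<inter> {b*k..<b*k+k} = {}"
proof -
  have *: "{a*k..<a*k+k} \<inter> {b*k..<b*k+k} = {}" if "a < b" for a b :: nat
  proof -
    have "a*k+k = Suc a * k" by simp
    also have "\<dots> \<le> b*k" using that by (intro mult_le_mono1) simp
    finally show ?thesis by auto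
  qed
  show ?thesis
  proof (cases "a < b")
    case True then show ?thesis using * by blast
  next
    case False then have "b < a" using assms by simp
    then show ?thesis using *[of b a] by blast
  qed
qed

lemma blocks_union:
  fixes t k :: nat
  assumes "k \<ge> 1" shows "(\<Union>a<t. {a*k..<a*k+k}) = {..<t*k}"
proof
  show "(\<Union>a<t. {a*k..<a*k+k}) \<subseteq> {..<t*k}"
  proof
    fix x assume "x \<in> (\<Union>a<t. {a*k..<a*k+k})"
    then obtain a where "a < t" "x \<in> {a*k..<a*k+k}" by blast
    moreover have "a*k+k \<le> t*k" proof -
      have "a*k+k = Suc a * k" by simp
      also have "\<dots> \<le> t*k" using \<open>a<t\<close> by (intro mult_le_mono1) simp
      finally show ?thesis .
    qed
    ultimately show "x \<in> {..<t*k}" by auto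
  qed
next
  show "{..<t*k} \<subseteq> (\<Union>a<t. {a*k..<a*k+k})"
  proof
    fix x assume "x \<in> {..<t*k}"
    then have a1: "x div k < t" by (simp add: less_mult_imp_div_less)
    have a2: "x div k * k \<le> x" by (simp add: div_times_less_eq_dividend)
    have "x mod k < k" using assms by simp
    then have a3: "x < x div k * k + k" using div_mult_mod_eq[of x k] by linarith
    have "x \<in> {x div k * k..<x div k * k + k}" using a2 a3 by simp
    then show "x \<in> (\<Union>a<t. {a*k..<a*k+k})" using a1 by blast
  qed
qed

lemma block_info:
  assumes t: "t \<ge> 1" and k: "k \<ge> 1" and GL: "\<forall>b\<in>{1..<t}. A b \<in> GL2 k" and a: "a < t"
  shows "info_set (t*k) k (row_space k (t*k) (sys_matrix t k A)) {a*k..<a*k+k}"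
  unfolding info_set_def
proof (intro conjI exI)
  show "{a*k..<a*k+k} \<subseteq> {..<t*k}" using blocks_union[OF k, of t] a by blast
  show "card {a*k..<a*k+k} = k" by simp
  show "gen_matrix (t*k) k (sys_matrix t k A) (row_space k (t*k) (sys_matrix t k A))"
    by (rule sys_gen[OF t])
  show "\<forall>d. (\<forall>i<k. (\<Sum>j\<in>{a*k..<a*k+k}. d j * sys_matrix t k A i j) = 0) \<longrightarrow> (\<forall>j\<in>{a*k..<a*k+k}. d j = 0)"
  proof (intro allI impI ballI)
    fix d j assume h: "\<forall>i<k. (\<Sum>j\<in>{a*k..<a*k+k}. d j * sys_matrix t k A i j) = 0"
      and j: "j \<in> {a*k..<a*k+k}"
    define e where "e c = d (a*k+c)" for c
    have h': "\<forall>i<k. (\<Sum>c<k. e c * sys_matrix t k A i (a*k+c)) = 0"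
      using h unfolding sum_block e_def by blast
    have e0: "\<forall>c<k. e c = 0"
    proof (cases "a = 0")
      case True
      show ?thesis
      proof (intro allI impI)
        fix i assume i: "i < k"
        have "e i = (\<Sum>c<k. e c * id_mat k c i)" using sum_id_right[OF i] by simp
        also have "\<dots> = (\<Sum>c<k. e c * sys_matrix t k A i (a*k+c))"
          using sm_low[OF t i] True by (intro sum.cong) (auto simp: id_mat_def)
        also have "\<dots> = 0" using h' i by blast
        finally show "e i = 0" .
      qed
    next
      case False
      then have a1: "1 \<le> a" by simp
      have "\<forall>i<k. (\<Sum>c<k. A a i c * e c) = 0"
      proof (intro allI impI)
        fix i assume i: "i < k"
        have "(\<Sum>c<k. A a i c * e c) = (\<Sum>c<k. e c * sys_matrix t k A i (a*k+c))"
          using sm_block[OF a1 a i] by (intro sum.cong) (auto simp: mult.commute)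
        also have "\<dots> = 0" using h' i by blast
        finally show "(\<Sum>c<k. A a i c * e c) = 0" .
      qed
      moreover have "A a \<in> GL2 k" using GL a1 a by auto
      ultimately show ?thesis using GL2_inj by blast
    qed
    have "j = a*k + (j - a*k)" "j - a*k < k" using j by auto
    then show "d j = 0" using e0 unfolding e_def by metis
  qed
qed

lemma sys_mem:
  assumes t: "t \<ge> 1" and k: "k \<ge> 1" and GL: "\<forall>b\<in>{1..<t}. A b \<in> GL2 k"
  shows "row_space k (t*k) (sys_matrix t k A) \<in> sys_CIS t k"
  unfolding sys_CIS_def CIS_code_def linear_code_def
proof (intro CollectI conjI exI)
  show "gen_matrix (t*k) k (sys_matrix t k A) (row_space k (t*k) (sys_matrix t k A))"
    by (rule sys_gen[OF t])
  then show "gen_matrix (t*k) k (sys_matrix t k A) (row_space k (t*k) (sys_matrix t k A))" .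
  show "\<forall>b\<in>{1..<t}. A b \<in> GL2 k" by fact
  show "\<forall>a<t. info_set (t*k) k (row_space k (t*k) (sys_matrix t k A)) {a*k..<a*k+k}"
    using block_info[OF t k GL] by blast
  show "\<forall>a<t. \<forall>b<t. a \<noteq> b \<longrightarrow> {a*k..<a*k+k} \<inter> {b*k..<b*k+k} = {}"
    using blocks_disjoint by blast
  show "(\<Union>a<t. {a*k..<a*k+k}) = {..<t*k}" by (rule blocks_union[OF k])
qed

lemma rows_eq:
  assumes t: "t \<ge> 1" and sub: "row_space k (t*k) (sys_matrix t k A) \<subseteq> row_space k (t*k) (sys_matrix t k A')"
    and i: "i < k"
  shows "sys_matrix t k A i j = sys_matrix t k A' i j"
proof -
  let ?G = "sys_matrix t k A" and ?G' = "sys_matrix t k A'"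
  have "(\<lambda>j. ?G i j) = (\<lambda>j. \<Sum>l<k. id_mat k i l * ?G l j)"
    using sum_id_left[OF i] by simp
  then have "(\<lambda>j. ?G i j) \<in> row_space k (t*k) ?G" unfolding row_space_def by blast
  with sub obtain c where c: "(\<lambda>j. ?G i j) = (\<lambda>j. \<Sum>l<k. c l * ?G' l j)"
    unfolding row_space_def by blast
  have cl: "c l = id_mat k i l" if l: "l < k" for l
  proof -
    have "id_mat k i l = ?G i l" using sm_low[OF t i l] by simp
    also have "\<dots> = (\<Sum>m<k. c m * ?G' m l)" using fun_cong[OF c] by simp
    also have "\<dots> = (\<Sum>m<k. c m * id_mat k m l)"
      using sm_low[OF t _ l] by (intro sum.cong) auto
    also have "\<dots> = c l" by (rule sum_id_right[OF l])
    finally show ?thesis by simp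
  qed
  have "?G i j = (\<Sum>l<k. c l * ?G' l j)" using fun_cong[OF c] by simp
  also have "\<dots> = (\<Sum>l<k. id_mat k i l * ?G' l j)" using cl by (intro sum.cong) auto
  also have "\<dots> = ?G' i j" by (rule sum_id_left[OF i])
  finally show ?thesis .
qed

lemma sys_inj:
  assumes t: "t \<ge> 1"
  shows "inj_on (\<lambda>A. row_space k (t*k) (sys_matrix t k A)) (PiE {1..<t} (\<lambda>_. GL2 k))"
proof (rule inj_onI)
  fix A A' assume A: "A \<in> PiE {1..<t} (\<lambda>_. GL2 k)" and A': "A' \<in> PiE {1..<t} (\<lambda>_. GL2 k)"
    and eq: "row_space k (t*k) (sys_matrix t k A) = row_space k (t*k) (sys_matrix t k A')"
  show "A = A'"
  proof (rule PiE_ext[OF A A'])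
    fix b assume b: "b \<in> {1..<t}"
    have AG: "A b \<in> bmats k k" "A' b \<in> bmats k k" using A A' b unfolding GL2_def by auto
    show "A b = A' b"
    proof (intro ext)
      fix i c
      show "A b i c = A' b i c"
      proof (cases "i < k \<and> c < k")
        case True
        have "A b i c = sys_matrix t k A i (b*k+c)" using sm_block b True by simp
        also have "\<dots> = sys_matrix t k A' i (b*k+c)" using rows_eq[OF t _ ] eq True by blast
        also have "\<dots> = A' b i c" using sm_block b True by simp
        finally show ?thesis .
      next
        case False
        then show ?thesis using AG unfolding bmats_def by auto
      qed
    qed
  qed
qed

lemma sys_surj:
  assumes t: "t \<ge> 1" and k: "k \<ge> 1"
  shows "(\<lambda>A. row_space k (t*k) (sys_matrix t k A)) ` (PiE {1..<t} (\<lambda>_. GL2 k)) = sys_CIS t k"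
proof
  show "(\<lambda>A. row_space k (t*k) (sys_matrix t k A)) ` (PiE {1..<t} (\<lambda>_. GL2 k)) \<subseteq> sys_CIS t k"
    using sys_mem[OF t k] by (auto simp: PiE_def Pi_def)
next
  show "sys_CIS t k \<subseteq> (\<lambda>A. row_space k (t*k) (sys_matrix t k A)) ` (PiE {1..<t} (\<lambda>_. GL2 k))"
  proof
    fix C assume "C \<in> sys_CIS t k"
    then obtain A where GL: "\<forall>b\<in>{1..<t}. A b \<in> GL2 k" and g: "gen_matrix (t*k) k (sys_matrix t k A) C"
      unfolding sys_CIS_def by blast
    define A' where "A' = restrict A {1..<t}"
    have "A' \<in> PiE {1..<t} (\<lambda>_. GL2 k)" using GL unfolding A'_def by auto
    moreover have "sys_matrix t k A' = sys_matrix t k A"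
    proof (intro ext)
      fix i j
      show "sys_matrix t k A' i j = sys_matrix t k A i j"
      proof (cases "i < k \<and> j < t*k \<and> \<not> j < k")
        case True
        then have "j div k < t" by (simp add: less_mult_imp_div_less)
        moreover have "1 \<le> j div k" using True k by (metis div_le_mono div_self not_le not_one_le_zero)
        ultimately have "j div k \<in> {1..<t}" by simp
        then show ?thesis unfolding sys_matrix_def A'_def by simp
      next
        case False
        then show ?thesis unfolding sys_matrix_def by auto
      qed
    qed
    moreover have "C = row_space k (t*k) (sys_matrix t k A)" using g unfolding gen_matrix_def by blast
    ultimately show "C \<in> (\<lambda>A. row_space k (t*k) (sys_matrix t k A)) ` (PiE {1..<t} (\<lambda>_. GL2 k))"
      by (metis image_eqI)
  qed
qed

theorem proposition7:
  fixes t k :: nat and R :: "(nat \<Rightarrow> bit) set set"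
  assumes "k \<ge> 1" and "t \<ge> 2"
    and "finite R"
    and "R \<subseteq> sys_CIS t k"
    and "\<forall>C\<in>all_CIS t k. \<exists>C'\<in>R. C \<in> orbit_Sn (t*k) C'"
    and "\<forall>C1\<in>R. \<forall>C2\<in>R. C1 \<noteq> C2 \<longrightarrow> orbit_Sn (t*k) C1 \<noteq> orbit_Sn (t*k) C2"
  shows "card (GL2 k) ^ (t - 1) = (\<Sum>C\<in>R. card (orbit_Sn (t*k) C \<inter> sys_CIS t k))"
proof -
  have t: "t \<ge> 1" using assms(2) by simp
  have bij: "bij_betw (\<lambda>A. row_space k (t*k) (sys_matrix t k A)) (PiE {1..<t} (\<lambda>_. GL2 k)) (sys_CIS t k)"
    unfolding bij_betw_def using sys_inj[OF t] sys_surj[OF t assms(1)] by blast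
  have finPi: "finite (PiE {1..<t} (\<lambda>_. GL2 k))" by (rule finite_PiE) (auto simp: finite_GL2)
  have finS: "finite (sys_CIS t k)" using bij finPi bij_betw_finite by blast
  have "card (sys_CIS t k) = card (PiE {1..<t} (\<lambda>_. GL2 k))" using bij bij_betw_same_card by metis
  also have "\<dots> = card (GL2 k) ^ (t - 1)" by (simp add: card_PiE)
  finally have c1: "card (sys_CIS t k) = card (GL2 k) ^ (t - 1)" .
  have U: "sys_CIS t k = (\<Union>C\<in>R. orbit_Sn (t*k) C \<inter> sys_CIS t k)"
  proof
    show "sys_CIS t k \<subseteq> (\<Union>C\<in>R. orbit_Sn (t*k) C \<inter> sys_CIS t k)"
    proof
      fix D assume D: "D \<in> sys_CIS t k"
      then have "D \<in> all_CIS t k" unfolding sys_CIS_def all_CIS_def by blast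
      then obtain C' where "C' \<in> R" "D \<in> orbit_Sn (t*k) C'" using assms(5) by blast
      then show "D \<in> (\<Union>C\<in>R. orbit_Sn (t*k) C \<inter> sys_CIS t k)" using D by blast
    qed
  qed blast
  have disj: "\<forall>C1\<in>R. \<forall>C2\<in>R. C1 \<noteq> C2 \<longrightarrow> (orbit_Sn (t*k) C1 \<inter> sys_CIS t k) \<inter> (orbit_Sn (t*k) C2 \<inter> sys_CIS t k) = {}"
  proof (intro ballI impI)
    fix C1 C2 assume C: "C1 \<in> R" "C2 \<in> R" "C1 \<noteq> C2"
    show "(orbit_Sn (t*k) C1 \<inter> sys_CIS t k) \<inter> (orbit_Sn (t*k) C2 \<inter> sys_CIS t k) = {}"
    proof (rule ccontr)
      assume "\<not> ?thesis"
      then obtain D where "D \<in> orbit_Sn (t*k) C1" "D \<in> orbit_Sn (t*k) C2" by blast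
      then have "orbit_Sn (t*k) C1 = orbit_Sn (t*k) C2" using orbit_eq by metis
      then show False using assms(6) C by blast
    qed
  qed
  have "card (sys_CIS t k) = (\<Sum>C\<in>R. card (orbit_Sn (t*k) C \<inter> sys_CIS t k))"
    by (subst U, rule card_UN_disjoint[OF assms(3)]) (use finS disj in auto)
  then show ?thesis using c1 by simp
qed

end
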